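(* If there exists a $1$-perfect code in $H(q+1,q)$, then the vertex set of $H(q,q)$ can be partitioned into distance-$2$ MDS codes $M^0,\dots,M^{q-1}$ such that each $M^i$ is a union of $q$ pairwise disjoint distance-$3$ MDS codes.
   Context: The Hamming graph $H(n,q)$ has vertex set $\mathbb{Z}_q^n$ with the Hamming distance $d$ (number of differing coordinates); vertices at distance $1$ are adjacent. A distance-$d$ MDS code in $H(n,q)$ is a set of $q^{n-d+1}$ vertices with pairwise Hamming distance at least $d$. A $1$-perfect code in $H(n,q)$ is a set $C$ of vertices such that every ball $\{y: d(x,y)\le1\}$ contains exactly one element of $C$. *)

theory Defs
  imports Main
begin

text \<open>Vertices of the Hamming graph H(n,q): words of length n over {0..q-1},
  represented as functions nat => nat that vanish outside {0..n-1}.\<close>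
definition hvert :: "nat \<Rightarrow> nat \<Rightarrow> (nat \<Rightarrow> nat) set" where
  "hvert n q = {x. (\<forall>i<n. x i < q) \<and> (\<forall>i\<ge>n. x i = 0)}"

definition hdist :: "nat \<Rightarrow> (nat \<Rightarrow> nat) \<Rightarrow> (nat \<Rightarrow> nat) \<Rightarrow> nat" where
  "hdist n x y = card {i. i < n \<and> x i \<noteq> y i}"

definition mds_code :: "nat \<Rightarrow> nat \<Rightarrow> nat \<Rightarrow> (nat \<Rightarrow> nat) set \<Rightarrow> bool" where
  "mds_code n q d C \<longleftrightarrow> C \<subseteq> hvert n q \<and> finite C \<and> card C = q ^ (n + 1 - d)
     \<and> (\<forall>x\<in>C. \<forall>y\<in>C. x \<noteq> y \<longrightarrow> hdist n x y \<ge> d)"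

definition perfect1_code :: "nat \<Rightarrow> nat \<Rightarrow> (nat \<Rightarrow> nat) set \<Rightarrow> bool" where
  "perfect1_code n q C \<longleftrightarrow> C \<subseteq> hvert n q \<and>
     (\<forall>x\<in>hvert n q. \<exists>!c. c \<in> C \<and> hdist n x c \<le> 1)"

end

theory Submission
  imports Defs "HOL-Library.FuncSet"
begin


lemma hvert_bij: "bij_betw (\<lambda>x. restrict x {..<n}) (hvert n q) (PiE {..<n} (\<lambda>_. {..<q}))"
proof -
  have inj: "inj_on (\<lambda>x. restrict x {..<n}) (hvert n q)"
  proof (rule inj_onI)
    fix x y assume x: "x \<in> hvert n q" and y: "y \<in> hvert n q"
      and e: "restrict x {..<n} = restrict y {..<n}"
    show "x = y"
    proof
      fix i show "x i = y i"
      proof (cases "i < n")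
        case True then show ?thesis using fun_cong[OF e, of i] by simp
      next
        case False then show ?thesis using x y by (simp add: hvert_def)
      qed
    qed
  qed
  have im: "(\<lambda>x. restrict x {..<n}) ` hvert n q = PiE {..<n} (\<lambda>_. {..<q})"
  proof
    show "(\<lambda>x. restrict x {..<n}) ` hvert n q \<subseteq> PiE {..<n} (\<lambda>_. {..<q})"
      by (auto simp: hvert_def PiE_iff split: if_splits)
  next
    show "PiE {..<n} (\<lambda>_. {..<q}) \<subseteq> (\<lambda>x. restrict x {..<n}) ` hvert n q"
    proof
      fix f assume f: "f \<in> PiE {..<n} (\<lambda>_. {..<q})"
      let ?x = "\<lambda>i. if i < n then f i else 0"
      have a: "?x \<in> hvert n q" using f by (auto simp: hvert_def)
      have b: "restrict ?x {..<n} = f" using f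
        by (auto simp: restrict_def PiE_def extensional_def)
      show "f \<in> (\<lambda>x. restrict x {..<n}) ` hvert n q" by (rule image_eqI[where x="?x" and f="\<lambda>x. restrict x {..<n}", OF b[symmetric] a])
    qed
  qed
  show ?thesis using inj im by (simp add: bij_betw_def)
qed

lemma finite_hvert: "finite (hvert n q)"
  using bij_betw_finite[OF hvert_bij] finite_PiE[of "{..<n}" "\<lambda>_. {..<q}"] by simp

lemma card_hvert: "card (hvert n q) = q ^ n"
  using bij_betw_same_card[OF hvert_bij] by (simp add: card_PiE)

lemma hdist_sym: "hdist n x y = hdist n y x"
  unfolding hdist_def by (rule arg_cong[where f=card]) auto

lemma finite_D: "finite {i. i < (n::nat) \<and> x i \<noteq> y i}"
  by (rule finite_subset[of _ "{..<n}"]) auto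

lemma hdist_self: "hdist n x x = 0"
  by (simp add: hdist_def)

lemma hdist_eq0: assumes "x \<in> hvert n q" "y \<in> hvert n q" "hdist n x y = 0" shows "x = y"
proof
  fix i
  have "{i. i < n \<and> x i \<noteq> y i} = {}" using assms(3) finite_D[of n x y] by (simp add: hdist_def)
  then show "x i = y i" using assms(1,2) by (cases "i < n") (auto simp: hvert_def)
qed

lemma hdist_upd_le: "hdist n x (x(i:=a)) \<le> 1"
proof -
  have "{j. j < n \<and> x j \<noteq> (x(i:=a)) j} \<subseteq> {i}" by auto
  then have "card {j. j < n \<and> x j \<noteq> (x(i:=a)) j} \<le> card {i}" by (rule card_mono[rotated]) simp
  then show ?thesis by (simp add: hdist_def)
qed

lemma hdist_upd: "hdist (Suc n) (x(n:=a)) (y(n:=b)) = hdist n x y + (if a = b then 0 else 1)"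
proof -
  have e: "{i. i < Suc n \<and> (x(n:=a)) i \<noteq> (y(n:=b)) i} =
        {i. i < n \<and> x i \<noteq> y i} \<union> (if a = b then {} else {n})"
    by (auto simp: less_Suc_eq)
  show ?thesis unfolding hdist_def e using finite_D[of n x y] by auto
qed

lemma hdist_one_upd:
  assumes "x \<in> hvert n q" "c \<in> hvert n q" "hdist n x c = 1"
  shows "\<exists>i<n. x i < q \<and> x i \<noteq> c i \<and> x = c(i := x i)"
proof -
  obtain i0 where D: "{i. i < n \<and> x i \<noteq> c i} = {i0}"
    using assms(3) card_1_singletonE unfolding hdist_def by blast
  have i0: "i0 < n" "x i0 \<noteq> c i0" using D by auto
  have "x = c(i0 := x i0)"
  proof
    fix j show "x j = (c(i0 := x i0)) j"
    proof (cases "j = i0")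
      case False
      show ?thesis
      proof (cases "j < n")
        case True then show ?thesis using False D by auto
      next
        case False then show ?thesis using assms(1,2) \<open>j \<noteq> i0\<close> by (auto simp: hvert_def)
      qed
    qed simp
  qed
  moreover have "x i0 < q" using assms(1) i0 by (simp add: hvert_def)
  ultimately show ?thesis using i0 by blast
qed

lemma ball_card:
  assumes c: "c \<in> hvert n q"
  shows "card {x \<in> hvert n q. hdist n x c \<le> 1} \<le> 1 + n * (q - 1)"
proof -
  let ?U = "\<Union>i<n. (\<lambda>a. c(i:=a)) ` ({..<q} - {c i})"
  have sub: "{x \<in> hvert n q. hdist n x c \<le> 1} \<subseteq> insert c ?U"
  proof
    fix x assume x: "x \<in> {x \<in> hvert n q. hdist n x c \<le> 1}"
    show "x \<in> insert c ?U"
    proof (cases "hdist n x c = 0")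
      case True then show ?thesis using hdist_eq0[of x n q c] x c by auto
    next
      case False
      then have "hdist n x c = 1" using x by auto
      then obtain i where "i<n" "x i < q" "x i \<noteq> c i" "x = c(i := x i)"
        using hdist_one_upd[of x n q c] x c by auto
      then show ?thesis by blast
    qed
  qed
  have fU: "finite ?U" by auto
  have "card {x \<in> hvert n q. hdist n x c \<le> 1} \<le> card (insert c ?U)"
    by (rule card_mono[OF _ sub]) (simp add: fU)
  also have "\<dots> \<le> Suc (card ?U)" by (simp add: card_insert_if fU)
  also have "card ?U \<le> (\<Sum>i<n. card ((\<lambda>a. c(i:=a)) ` ({..<q} - {c i})))"
    by (rule card_UN_le) simp
  also have "\<dots> \<le> (\<Sum>i<n. q - 1)"
  proof (rule sum_mono)
    fix i assume "i \<in> {..<n}"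
    then have "c i < q" using c by (simp add: hvert_def)
    then have "card ({..<q} - {c i}) = q - 1" by simp
    then show "card ((\<lambda>a. c(i:=a)) ` ({..<q} - {c i})) \<le> q - 1"
      by (metis card_image_le finite_Diff finite_lessThan)
  qed
  finally show ?thesis by simp
qed

lemma perfect_dist3:
  assumes P: "perfect1_code n q C" and c1: "c1 \<in> C" and c2: "c2 \<in> C" and ne: "c1 \<noteq> c2"
  shows "3 \<le> hdist n c1 c2"
proof (rule ccontr)
  assume nl: "\<not> 3 \<le> hdist n c1 c2"
  have h1: "c1 \<in> hvert n q" "c2 \<in> hvert n q" using P c1 c2 by (auto simp: perfect1_code_def)
  have uniq: "\<And>y. y \<in> hvert n q \<Longrightarrow> \<exists>!c. c \<in> C \<and> hdist n y c \<le> 1"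
    using P by (simp add: perfect1_code_def)
  show False
  proof (cases "hdist n c1 c2 \<le> 1")
    case True
    then show False using uniq[OF h1(1)] c1 c2 ne hdist_self[of n c1] by force
  next
    case False
    then have "{i. i < n \<and> c1 i \<noteq> c2 i} \<noteq> {}" by (intro notI) (simp add: hdist_def)
    then obtain i1 where i1: "i1 < n" "c1 i1 \<noteq> c2 i1" by auto
    define y where "y = c1(i1 := c2 i1)"
    have yv: "y \<in> hvert n q" using h1 i1 by (auto simp: hvert_def y_def)
    have "hdist n y c1 \<le> 1" using hdist_upd_le[of n c1 i1 "c2 i1"] hdist_sym y_def by metis
    moreover have "hdist n y c2 \<le> 1"
    proof -
      have "{i. i < n \<and> y i \<noteq> c2 i} \<subseteq> {i. i < n \<and> c1 i \<noteq> c2 i} - {i1}"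
        by (auto simp: y_def)
      then have "card {i. i < n \<and> y i \<noteq> c2 i} \<le> card ({i. i < n \<and> c1 i \<noteq> c2 i} - {i1})"
        by (rule card_mono[rotated]) (simp add: finite_D)
      also have "\<dots> = hdist n c1 c2 - 1" using i1 finite_D by (simp add: hdist_def)
      finally show ?thesis using nl by (simp add: hdist_def)
    qed
    ultimately show False using uniq[OF yv] c1 c2 ne by blast
  qed
qed



lemma mod_cancel_lt: assumes "(a::nat) < q" "b < q" "(a + k) mod q = (b + k) mod q" shows "a = b"
proof -
  have "(int a + int k) mod int q = (int b + int k) mod int q"
    using assms(3) by (metis of_nat_add of_nat_mod)
  then have "int q dvd (int a + int k) - (int b + int k)" by (simp add: mod_eq_dvd_iff)
  then have d: "int q dvd int a - int b" by simp
  show ?thesis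
  proof (rule ccontr)
    assume "a \<noteq> b"
    then have "int a - int b \<noteq> 0" by simp
    then have "int q \<le> \<bar>int a - int b\<bar>" using d dvd_imp_le_int[of "int a - int b" "int q"] by simp
    then show False using assms(1,2) by linarith
  qed
qed

theorem proposition8:
  fixes q :: nat
  assumes "q \<ge> 2"
    and "\<exists>C. perfect1_code (q + 1) q C"
  shows "\<exists>M :: nat \<Rightarrow> (nat \<Rightarrow> nat) set.
           (\<forall>i<q. mds_code q q 2 (M i))
         \<and> (\<forall>i<q. \<forall>j<q. i \<noteq> j \<longrightarrow> M i \<inter> M j = {})
         \<and> (\<Union>i<q. M i) = hvert q q
         \<and> (\<forall>i<q. \<exists>K :: nat \<Rightarrow> (nat \<Rightarrow> nat) set.
               (\<forall>j<q. mds_code q q 3 (K j))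
             \<and> (\<forall>j<q. \<forall>k<q. j \<noteq> k \<longrightarrow> K j \<inter> K k = {})
             \<and> M i = (\<Union>j<q. K j))"
proof -
  have q2: "q \<ge> 2" by fact
  obtain C where P: "perfect1_code (q+1) q C" using assms(2) by blast
  have Csub: "C \<subseteq> hvert (q+1) q" using P by (simp add: perfect1_code_def)
  have finC: "finite C" using finite_subset[OF Csub finite_hvert] .
  have d3: "\<And>c1 c2. c1 \<in> C \<Longrightarrow> c2 \<in> C \<Longrightarrow> c1 \<noteq> c2 \<Longrightarrow> 3 \<le> hdist (q+1) c1 c2"
    using perfect_dist3[OF P] by blast
  have cover: "hvert (q+1) q \<subseteq> (\<Union>c\<in>C. {x \<in> hvert (q+1) q. hdist (q+1) x c \<le> 1})"
    using P unfolding perfect1_code_def by blast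
  have sq: "1 + (q+1)*(q-1) = q^2" using q2 by (cases q) (auto simp: power2_eq_square algebra_simps)
  have "q^(q+1) = card (hvert (q+1) q)" by (simp add: card_hvert)
  also have "\<dots> \<le> card (\<Union>c\<in>C. {x \<in> hvert (q+1) q. hdist (q+1) x c \<le> 1})"
    by (rule card_mono[OF _ cover]) (simp add: finC finite_hvert)
  also have "\<dots> \<le> (\<Sum>c\<in>C. card {x \<in> hvert (q+1) q. hdist (q+1) x c \<le> 1})"
    by (rule card_UN_le[OF finC])
  also have "\<dots> \<le> (\<Sum>c\<in>C. q^2)"
    by (rule sum_mono) (use ball_card Csub sq in fastforce)
  finally have "q^(q+1) \<le> card C * q^2" by simp
  moreover have "q^(q+1) = q^(q-1) * q^2" using q2
  proof -
    have "q+1 = (q-1)+2" using q2 by simp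
    then show ?thesis by (simp only: power_add)
  qed
  ultimately have Clow: "q^(q-1) \<le> card C" using q2 by simp

  define Kj where "Kj j = {x \<in> hvert q q. x(q:=j) \<in> C}" for j
  have Kj_sub: "Kj j \<subseteq> hvert q q" for j by (auto simp: Kj_def)
  have hv0: "x \<in> hvert q q \<Longrightarrow> x q = 0" for x by (simp add: hvert_def)
  have P1: "3 \<le> hdist q x y + (if j = j' then 0 else 1)"
    if x: "x \<in> Kj j" and y: "y \<in> Kj j'" and ne: "x \<noteq> y \<or> j \<noteq> j'" for x y j j'
  proof -
    have "x(q:=j) \<noteq> y(q:=j')"
    proof
      assume e: "x(q:=j) = y(q:=j')"
      have "(x(q:=j)) q = (y(q:=j')) q" using e by simp
      then have "j = j'" by simp
      moreover have "x = y"
      proof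
        fix i show "x i = y i"
          using fun_cong[OF e, of i] hv0[OF subsetD[OF Kj_sub x]] hv0[OF subsetD[OF Kj_sub y]] by (cases "i = q") auto
      qed
      ultimately show False using ne by simp
    qed
    then have "3 \<le> hdist (Suc q) (x(q:=j)) (y(q:=j'))" using d3 x y by (auto simp: Kj_def)
    then show ?thesis by (simp add: hdist_upd)
  qed
  have Kj_le: "card (Kj j) \<le> q^(q-2)" for j
  proof -
    define pr where "pr x = (\<lambda>i. if i < q-2 then x i else (0::nat))" for x :: "nat \<Rightarrow> nat"
    have inj: "inj_on pr (Kj j)"
    proof (rule inj_onI)
      fix x y assume x: "x \<in> Kj j" and y: "y \<in> Kj j" and e: "pr x = pr y"
      have "{i. i < q \<and> x i \<noteq> y i} \<subseteq> {q-2, q-1}"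
      proof
        fix i assume i: "i \<in> {i. i < q \<and> x i \<noteq> y i}"
        then have "\<not> i < q-2" using fun_cong[OF e, of i] by (auto simp: pr_def)
        then show "i \<in> {q-2, q-1}" using i by auto
      qed
      then have "hdist q x y \<le> card {q-2, q-1}" unfolding hdist_def by (rule card_mono[rotated]) simp
      also have "\<dots> \<le> 2" by (simp add: card_insert_if)
      finally show "x = y" using P1[OF x y] by (cases "x = y") auto
    qed
    have "pr ` Kj j \<subseteq> hvert (q-2) q"
    proof
      fix z assume "z \<in> pr ` Kj j"
      then obtain x where x: "x \<in> Kj j" "z = pr x" by auto
      then have "x \<in> hvert q q" using Kj_sub by auto
      then show "z \<in> hvert (q-2) q" using x(2) by (auto simp: pr_def hvert_def)
    qed
    then have "card (Kj j) \<le> card (hvert (q-2) q)"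
      using card_inj_on_le[OF inj _ finite_hvert] by blast
    then show ?thesis by (simp add: card_hvert)
  qed
  have Csplit: "C = (\<Union>j<q. {c \<in> C. c q = j})" using Csub by (auto simp: hvert_def)
  have cardCj: "card {c \<in> C. c q = j} = card (Kj j)" if "j < q" for j
  proof -
    have inj: "inj_on (\<lambda>c. c(q:=0)) {c \<in> C. c q = j}"
    proof (rule inj_onI)
      fix c d assume c: "c \<in> {c \<in> C. c q = j}" and d: "d \<in> {c \<in> C. c q = j}"
        and e: "c(q:=0) = d(q:=0)"
      show "c = d"
      proof
        fix i show "c i = d i" using fun_cong[OF e, of i] c d by (cases "i = q") auto
      qed
    qed
    have im: "(\<lambda>c. c(q:=0)) ` {c \<in> C. c q = j} = Kj j"
    proof
      show "(\<lambda>c. c(q:=0)) ` {c \<in> C. c q = j} \<subseteq> Kj j"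
      proof
        fix x assume "x \<in> (\<lambda>c. c(q:=0)) ` {c \<in> C. c q = j}"
        then obtain c where c: "c \<in> C" "c q = j" "x = c(q:=0)" by auto
        have "c \<in> hvert (q+1) q" using c Csub by auto
        then have "x \<in> hvert q q" using c by (auto simp: hvert_def)
        moreover have "x(q:=j) = c" using c by auto
        ultimately show "x \<in> Kj j" using c by (auto simp: Kj_def)
      qed
    next
      show "Kj j \<subseteq> (\<lambda>c. c(q:=0)) ` {c \<in> C. c q = j}"
      proof
        fix x assume x: "x \<in> Kj j"
        then have "x = (x(q:=j))(q:=0)" using hv0[OF subsetD[OF Kj_sub x]] by (auto intro!: ext)
        moreover have "x(q:=j) \<in> {c \<in> C. c q = j}" using x by (auto simp: Kj_def)
        ultimately show "x \<in> (\<lambda>c. c(q:=0)) ` {c \<in> C. c q = j}" by blast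
      qed
    qed
    show ?thesis using card_image[OF inj] im by simp
  qed
  have sumC: "card C = (\<Sum>j<q. card (Kj j))"
  proof -
    have "card C = card (\<Union>j<q. {c \<in> C. c q = j})" using Csplit by simp
    also have "\<dots> = (\<Sum>j<q. card {c \<in> C. c q = j})"
      by (rule card_UN_disjoint) (use finC in auto)
    also have "\<dots> = (\<Sum>j<q. card (Kj j))" using cardCj by simp
    finally show ?thesis .
  qed
  have qq: "q * q^(q-2) = q^(q-1)" using q2
  proof -
    have "q-1 = Suc (q-2)" using q2 by simp
    then show ?thesis by (simp only: power_Suc)
  qed
  have Kj_card: "card (Kj j) = q^(q-2)" if j: "j < q" for j
  proof (rule ccontr)
    assume "card (Kj j) \<noteq> q^(q-2)"
    then have lt: "card (Kj j) < q^(q-2)" using Kj_le[of j] by simp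
    have "(\<Sum>j<q. card (Kj j)) < (\<Sum>j<q. q^(q-2))"
      by (rule sum_strict_mono_ex1) (use Kj_le lt j in auto)
    then show False using sumC Clow qq by simp
  qed
  have finKj: "finite (Kj j)" for j using finite_subset[OF Kj_sub finite_hvert] .

  define sh where "sh k x = x((q-1) := (x (q-1) + k) mod q)" for k x
  have q0: "q > 0" "q - 1 < q" using q2 by auto
  have sh_in: "sh k x \<in> hvert q q" if "x \<in> hvert q q" for k x
    using that q0 by (auto simp: hvert_def sh_def)
  have sh_inj: "inj_on (sh k) (hvert q q)" for k
  proof (rule inj_onI)
    fix x y assume x: "x \<in> hvert q q" and y: "y \<in> hvert q q" and e: "sh k x = sh k y"
    have "x (q-1) = y (q-1)"
      using fun_cong[OF e, of "q-1"] x y q0 mod_cancel_lt by (auto simp: sh_def hvert_def)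
    then show "x = y"
    proof -
      assume h: "x (q-1) = y (q-1)"
      show "x = y"
      proof
        fix i show "x i = y i" using fun_cong[OF e, of i] h by (cases "i = q-1") (auto simp: sh_def)
      qed
    qed
  qed
  have sh_dist: "hdist q (sh k x) (sh k y) = hdist q x y" if x: "x \<in> hvert q q" and y: "y \<in> hvert q q" for k x y
  proof -
    have "{i. i < q \<and> sh k x i \<noteq> sh k y i} = {i. i < q \<and> x i \<noteq> y i}"
      using x y q0 mod_cancel_lt[of "x (q-1)" q "y (q-1)" k] by (auto simp: sh_def hvert_def)
    then show ?thesis by (simp add: hdist_def)
  qed
  define K where "K k j = sh k ` Kj j" for k j
  define M where "M k = (\<Union>j<q. K k j)" for k
  have K_sub: "K k j \<subseteq> hvert q q" for k j using sh_in Kj_sub by (auto simp: K_def)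
  have K_card: "card (K k j) = q^(q-2)" if "j < q" for k j
    unfolding K_def using card_image[OF inj_on_subset[OF sh_inj Kj_sub]] Kj_card that by simp
  have finK: "finite (K k j)" for k j using finKj by (simp add: K_def)
  have Kd: "3 \<le> hdist q x y + (if j = j' then 0 else 1)"
    if xK: "x \<in> K k j" and yK: "y \<in> K k j'" and nxy: "x \<noteq> y \<or> j \<noteq> j'" for k j j' x y
  proof -
    obtain x1 where x1: "x1 \<in> Kj j" "x = sh k x1" using xK unfolding K_def by blast
    obtain y1 where y1: "y1 \<in> Kj j'" "y = sh k y1" using yK unfolding K_def by blast
    have "x1 \<noteq> y1 \<or> j \<noteq> j'" using nxy x1 y1 by auto
    moreover have "hdist q x y = hdist q x1 y1"
      using sh_dist[OF subsetD[OF Kj_sub x1(1)] subsetD[OF Kj_sub y1(1)]] x1(2) y1(2) by simp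
    ultimately show ?thesis using P1[OF x1(1) y1(1)] by simp
  qed
  have K_disj: "K k j \<inter> K k j' = {}" if "j \<noteq> j'" for k j j'
    using Kd[of _ k j _ j'] that by (fastforce simp: hdist_self)
  have M_card: "card (M k) = q^(q-1)" for k
  proof -
    have "card (M k) = (\<Sum>j<q. card (K k j))" unfolding M_def
      by (rule card_UN_disjoint) (use finK K_disj in auto)
    also have "\<dots> = q * q^(q-2)" using K_card by simp
    finally show ?thesis using qq by simp
  qed
  have finM: "finite (M k)" for k using finK by (simp add: M_def)
  have M_sub: "M k \<subseteq> hvert q q" for k using K_sub by (auto simp: M_def)
  have M_mds: "mds_code q q 2 (M k)" for k
  proof -
    have "2 \<le> hdist q x y" if xM: "x \<in> M k" and yM: "y \<in> M k" and nxy: "x \<noteq> y" for x y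
    proof -
      obtain j where "x \<in> K k j" using xM unfolding M_def by blast
      moreover obtain j' where "y \<in> K k j'" using yM unfolding M_def by blast
      ultimately show ?thesis using Kd[of x k j y j'] nxy by (auto split: if_splits)
    qed
    moreover have "q + 1 - 2 = q - 1" by simp
    ultimately show ?thesis using M_card finM M_sub by (simp add: mds_code_def)
  qed
  have K_mds: "mds_code q q 3 (K k j)" if "j < q" for k j
  proof -
    have "3 \<le> hdist q x y" if "x \<in> K k j" "y \<in> K k j" "x \<noteq> y" for x y
      using Kd[of x k j y j] that by auto
    moreover have "q + 1 - 3 = q - 2" by simp
    ultimately show ?thesis using K_card[OF that] finK K_sub by (simp add: mds_code_def)
  qed
  have M_disj: "M k \<inter> M k' = {}" if k: "k < q" "k' < q" "k \<noteq> k'" for k k'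
  proof (rule ccontr)
    assume "M k \<inter> M k' \<noteq> {}"
    then obtain x j j' where xj: "x \<in> K k j" "x \<in> K k' j'" by (auto simp: M_def)
    obtain x1 where x1: "x1 \<in> Kj j" "x = sh k x1" using xj(1) unfolding K_def by blast
    obtain x2 where x2: "x2 \<in> Kj j'" "x = sh k' x2" using xj(2) unfolding K_def by blast
    have v: "x1 \<in> hvert q q" "x2 \<in> hvert q q" using x1 x2 Kj_sub by auto
    have e: "sh k x1 = sh k' x2" using x1 x2 by simp
    have ne: "x1 (q-1) \<noteq> x2 (q-1)"
    proof
      assume h: "x1 (q-1) = x2 (q-1)"
      have "(x1 (q-1) + k) mod q = (x1 (q-1) + k') mod q"
        using fun_cong[OF e, of "q-1"] h by (simp add: sh_def)
      then have "(k + x1 (q-1)) mod q = (k' + x1 (q-1)) mod q" by (simp add: add.commute)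
      then show False using mod_cancel_lt[OF k(1,2)] k(3) by blast
    qed
    have "{i. i < q \<and> x1 i \<noteq> x2 i} \<subseteq> {q-1}"
    proof
      fix i assume i: "i \<in> {i. i < q \<and> x1 i \<noteq> x2 i}"
      show "i \<in> {q-1}"
      proof (rule ccontr)
        assume "i \<notin> {q-1}"
        then show False using fun_cong[OF e, of i] i by (simp add: sh_def)
      qed
    qed
    then have "hdist q x1 x2 \<le> 1" unfolding hdist_def
      using card_mono[of "{q-1}"] by fastforce
    moreover have "x1 \<noteq> x2" using ne by auto
    ultimately show False using P1[OF x1(1) x2(1)] by (auto split: if_splits)
  qed
  have union: "(\<Union>k<q. M k) = hvert q q"
  proof (rule card_subset_eq[OF finite_hvert])
    show "(\<Union>k<q. M k) \<subseteq> hvert q q" using M_sub by auto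
    have "card (\<Union>k<q. M k) = (\<Sum>k<q. card (M k))"
      by (rule card_UN_disjoint) (use finM M_disj in auto)
    also have "\<dots> = q * q^(q-1)" using M_card by simp
    also have "\<dots> = q^q"
    proof -
      have "q = Suc (q-1)" using q2 by simp
      then show ?thesis by (metis power_Suc)
    qed
    finally show "card (\<Union>k<q. M k) = card (hvert q q)" by (simp add: card_hvert)
  qed
  have Kall: "\<forall>i<q. \<exists>Ka. (\<forall>j<q. mds_code q q 3 (Ka j)) \<and> (\<forall>j<q. \<forall>k<q. j \<noteq> k \<longrightarrow> Ka j \<inter> Ka k = {}) \<and> M i = (\<Union>j<q. Ka j)"
  proof (intro allI impI)
    fix i assume i: "i < q"
    show "\<exists>Ka. (\<forall>j<q. mds_code q q 3 (Ka j)) \<and> (\<forall>j<q. \<forall>k<q. j \<noteq> k \<longrightarrow> Ka j \<inter> Ka k = {}) \<and> M i = (\<Union>j<q. Ka j)"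
      by (rule exI[of _ "K i"]) (simp add: K_mds K_disj M_def)
  qed
  show ?thesis
    by (rule exI[of _ M]) (use M_mds M_disj union Kall in auto)
qed

end
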